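(* Let $X$ be a non-trivial separated locally convex space with topology $\sigma(X,X^* )$, $T$ an arbitrary index set, $f,g,h_t:X\to\overline{\mathbb{R}}$ ($t\in T$) proper convex functions, $A=\{x\in X:h_t(x)\le0\ \forall t\in T\}$, and $(P)$ the problem $\inf_{x\in A}\{f(x)-g(x)\}$. Let $B:=\{0\}\times\{0\}\times\,]0,+\infty[\,\times\mathbb{R}\subseteq W\times\mathbb{R}$. If $v(P)\in\mathbb{R}$, then $$\operatorname{epi}(f-g+\delta_A)^c\cap B=\{(0,0,\delta,\beta):\delta>0,\ \beta\ge -v(P)\}=\bigcap_{x\in X}\operatorname{epi}\big(c'(\cdot,x)-v(P)\big).$$ Consequently, $\operatorname{epi}(f-g+\delta_A)^c\cap B$ is an e$'$-convex set.
   Context: $X^*$ is the topological dual of $X$, $\langle x,x^*\rangle$ the pairing, $W:=X^*\times X^*\times\mathbb{R}$. The coupling $c:X\times W\to\overline{\mathbb{R}}$ is $c(x,(x^*,y^*,\alpha))=\langle x,x^*\rangle$ if $\langle x,y^*\rangle<\alpha$ and $+\infty$ otherwise; $c'((x^*,y^*,\alpha),x):=c(x,(x^*,y^*,\alpha))$. For $\varphi:X\to\overline{\mathbb{R}}$, $\varphi^c(w):=\sup_{x\in X}\{c(x,w)-\varphi(x)\}$, with the convention $(+\infty)+(-\infty)=(-\infty)+(+\infty)=(+\infty)-(+\infty)=(-\infty)-(-\infty)=-\infty$. $\delta_A$ is the indicator of $A$ ($0$ on $A$, $+\infty$ elsewhere); by convention $f(x)-g(x)=+\infty$ for $x\notin\operatorname{dom}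 f$. For $\psi:W\to\overline{\mathbb{R}}$, $\operatorname{epi}\psi=\{(w,\beta)\in W\times\mathbb{R}:\psi(w)\le\beta\}$. A function $k:W\to\overline{\mathbb{R}}$ is e$'$-convex if it is convex and is the pointwise supremum of a family of functions of the form $c'(\cdot,x)-\beta$ with $x\in X$, $\beta\in\mathbb{R}$. A set $D\subseteq W\times\mathbb{R}$ is e$'$-convex if $D=\operatorname{epi}k$ for some e$'$-convex function $k$. $v(P)$ is the optimal value of $(P)$. *)

theory Defs
  imports "HOL-Analysis.Analysis" "HOL-Library.Extended_Real"
begin

text \<open>The space X is a real vector space 'a; its topological dual X* is modelled as a
  set D of linear functionals on 'a (X carries sigma(X,X*), whose dual is exactly D).\<close>

definition dual_pair :: "('a::real_vector \<Rightarrow> real) set \<Rightarrow> bool" where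
  "dual_pair D \<longleftrightarrow> (\<forall>\<phi>\<in>D. linear \<phi>) \<and> (\<lambda>_. 0) \<in> D
     \<and> (\<forall>\<phi>\<in>D. \<forall>\<psi>\<in>D. (\<lambda>x. \<phi> x + \<psi> x) \<in> D)
     \<and> (\<forall>\<phi>\<in>D. \<forall>r::real. (\<lambda>x. r * \<phi> x) \<in> D)"

text \<open>Hausdorff (separated) for sigma(X,X*): the dual separates points.\<close>
definition separating :: "('a::real_vector \<Rightarrow> real) set \<Rightarrow> bool" where
  "separating D \<longleftrightarrow> (\<forall>x::'a. x \<noteq> 0 \<longrightarrow> (\<exists>\<phi>\<in>D. \<phi> x \<noteq> 0))"

type_synonym 'a W = "('a \<Rightarrow> real) \<times> ('a \<Rightarrow> real) \<times> real"

definition Wset :: "('a \<Rightarrow> real) set \<Rightarrow> 'a W set" where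
  "Wset D = D \<times> D \<times> UNIV"

definition coupling :: "'a \<Rightarrow> 'a W \<Rightarrow> ereal" where
  "coupling x w = (case w of (xs, ys, \<alpha>) \<Rightarrow> if ys x < \<alpha> then ereal (xs x) else \<infinity>)"

definition coupling' :: "'a W \<Rightarrow> 'a \<Rightarrow> ereal" where
  "coupling' w x = coupling x w"

definition esub :: "ereal \<Rightarrow> ereal \<Rightarrow> ereal" where
  "esub a b = (if (a = \<infinity> \<and> b = \<infinity>) \<or> (a = -\<infinity> \<and> b = -\<infinity>) then -\<infinity> else a - b)"

definition eadd :: "ereal \<Rightarrow> ereal \<Rightarrow> ereal" where
  "eadd a b = (if (a = \<infinity> \<and> b = -\<infinity>) \<or> (a = -\<infinity> \<and> b = \<infinity>) then \<infinity> else a + b)"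

definition cconj :: "('a \<Rightarrow> ereal) \<Rightarrow> 'a W \<Rightarrow> ereal" where
  "cconj \<phi> w = (SUP x. esub (coupling x w) (\<phi> x))"

definition indicator_e :: "'a set \<Rightarrow> 'a \<Rightarrow> ereal" where
  "indicator_e A x = (if x \<in> A then 0 else \<infinity>)"

definition fdiff :: "('a \<Rightarrow> ereal) \<Rightarrow> ('a \<Rightarrow> ereal) \<Rightarrow> 'a \<Rightarrow> ereal" where
  "fdiff f g x = (if f x = \<infinity> then \<infinity> else esub (f x) (g x))"

definition objP :: "('a \<Rightarrow> ereal) \<Rightarrow> ('a \<Rightarrow> ereal) \<Rightarrow> 'a set \<Rightarrow> 'a \<Rightarrow> ereal" where
  "objP f g A x = eadd (fdiff f g x) (indicator_e A x)"

definition valP :: "('a \<Rightarrow> ereal) \<Rightarrow> ('a \<Rightarrow> ereal) \<Rightarrow> 'a set \<Rightarrow> ereal" where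
  "valP f g A = (INF x\<in>A. fdiff f g x)"

definition proper_convex :: "('a::real_vector \<Rightarrow> ereal) \<Rightarrow> bool" where
  "proper_convex f \<longleftrightarrow> (\<forall>x. f x \<noteq> -\<infinity>) \<and> (\<exists>x. f x \<noteq> \<infinity>)
     \<and> convex {(x, t::real). f x \<le> ereal t}"

definition epiW :: "('a \<Rightarrow> real) set \<Rightarrow> ('a W \<Rightarrow> ereal) \<Rightarrow> ('a W \<times> real) set" where
  "epiW D \<psi> = {(w, \<beta>). w \<in> Wset D \<and> \<psi> w \<le> ereal \<beta>}"

definition wcomb :: "real \<Rightarrow> 'a W \<Rightarrow> 'a W \<Rightarrow> 'a W" where
  "wcomb l w1 w2 = (case w1 of (a1, b1, r1) \<Rightarrow> case w2 of (a2, b2, r2) \<Rightarrow>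
     ((\<lambda>x. l * a1 x + (1 - l) * a2 x), (\<lambda>x. l * b1 x + (1 - l) * b2 x), l * r1 + (1 - l) * r2))"

definition convex_W :: "('a \<Rightarrow> real) set \<Rightarrow> ('a W \<Rightarrow> ereal) \<Rightarrow> bool" where
  "convex_W D k \<longleftrightarrow> (\<forall>w1\<in>Wset D. \<forall>w2\<in>Wset D. \<forall>l b1 b2. 0 \<le> l \<longrightarrow> l \<le> 1 \<longrightarrow>
      k w1 \<le> ereal b1 \<longrightarrow> k w2 \<le> ereal b2 \<longrightarrow>
      k (wcomb l w1 w2) \<le> ereal (l * b1 + (1 - l) * b2))"

definition e'_convex_fun :: "('a \<Rightarrow> real) set \<Rightarrow> ('a W \<Rightarrow> ereal) \<Rightarrow> bool" where
  "e'_convex_fun D k \<longleftrightarrow> convex_W D k \<and>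
     (\<exists>F :: ('a \<times> real) set. \<forall>w\<in>Wset D. k w = (SUP (x, \<beta>)\<in>F. coupling' w x - ereal \<beta>))"

definition e'_convex_set :: "('a \<Rightarrow> real) set \<Rightarrow> ('a W \<times> real) set \<Rightarrow> bool" where
  "e'_convex_set D S \<longleftrightarrow> (\<exists>k. e'_convex_fun D k \<and> S = epiW D k)"

definition Bset :: "('a W \<times> real) set" where
  "Bset = {(((\<lambda>_. 0), (\<lambda>_. 0), \<delta>), \<beta>) | \<delta> \<beta>. \<delta> > 0}"

end

theory Submission
  imports Defs
begin

lemma lin_bounded_zero:
  fixes b :: "'a::real_vector \<Rightarrow> real"
  assumes "linear b" and "\<forall>x. b x < c"
  shows "b = (\<lambda>_. 0)"
proof
  fix x show "b x = 0"
  proof (rule ccontr)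
    assume nz: "b x \<noteq> 0"
    define t where "t = (\<bar>c\<bar> + 1) / b x"
    have "b (t *\<^sub>R x) = t * b x" using assms(1) by (simp add: linear_scale)
    also have "\<dots> = \<bar>c\<bar> + 1" using nz by (simp add: t_def)
    finally have "b (t *\<^sub>R x) = \<bar>c\<bar> + 1" .
    with assms(2) show False by (metis abs_ge_self add_le_cancel_left add_nonneg_nonneg
       less_add_same_cancel1 linorder_not_le order.strict_trans2 zero_less_one less_le_not_le)
  qed
qed

lemma char:
  assumes dp: "dual_pair D" and ab: "a \<in> D" "b \<in> D"
  shows "(\<forall>x. coupling x (a, b, \<alpha>) - ereal r \<le> ereal \<beta>) \<longleftrightarrow>
         (a = (\<lambda>_. 0) \<and> b = (\<lambda>_. 0) \<and> \<alpha> > 0 \<and> - r \<le> \<beta>)"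
proof
  assume H: "\<forall>x. coupling x (a, b, \<alpha>) - ereal r \<le> ereal \<beta>"
  have lin: "linear a" "linear b" using dp ab by (auto simp: dual_pair_def)
  have H2: "b x < \<alpha> \<and> a x < \<beta> + r + 1" for x
  proof -
    from H have h: "coupling x (a, b, \<alpha>) - ereal r \<le> ereal \<beta>" by blast
    show ?thesis
    proof (cases "b x < \<alpha>")
      case True with h show ?thesis by (simp add: coupling_def)
    next
      case False with h show ?thesis by (simp add: coupling_def)
    qed
  qed
  have "b = (\<lambda>_. 0)" using lin_bounded_zero[OF lin(2)] H2 by blast
  moreover have "a = (\<lambda>_. 0)" using lin_bounded_zero[OF lin(1)] H2 by blast
  moreover have "b 0 < \<alpha>" using H2 by blast
  moreover have "coupling 0 (a, b, \<alpha>) - ereal r \<le> ereal \<beta>" using H by blast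
  ultimately show "a = (\<lambda>_. 0) \<and> b = (\<lambda>_. 0) \<and> \<alpha> > 0 \<and> - r \<le> \<beta>"
    by (simp add: coupling_def)
next
  assume "a = (\<lambda>_. 0) \<and> b = (\<lambda>_. 0) \<and> \<alpha> > 0 \<and> - r \<le> \<beta>"
  then show "\<forall>x. coupling x (a, b, \<alpha>) - ereal r \<le> ereal \<beta>" by (simp add: coupling_def)
qed

lemma cconj_val:
  assumes "valP f g A = ereal r" and "\<delta> > 0"
  shows "cconj (objP f g A) ((\<lambda>_. 0), (\<lambda>_. 0), \<delta>) = - ereal r"
proof -
  have e: "esub (coupling x ((\<lambda>_. 0), (\<lambda>_. 0), \<delta>)) (objP f g A x) = - objP f g A x" for x
    using assms(2) by (cases "objP f g A x") (simp_all add: coupling_def esub_def)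
  have "(INF x. objP f g A x) = (INF x\<in>A. fdiff f g x)"
  proof (rule antisym)
    show "(INF x. objP f g A x) \<le> (INF x\<in>A. fdiff f g x)"
    proof (rule INF_greatest)
      fix x assume "x \<in> A"
      then have "objP f g A x = fdiff f g x" by (simp add: objP_def eadd_def indicator_e_def)
      then show "(INF x. objP f g A x) \<le> fdiff f g x" by (metis INF_lower UNIV_I)
    qed
    show "(INF x\<in>A. fdiff f g x) \<le> (INF x. objP f g A x)"
    proof (rule INF_greatest)
      fix x show "(INF x\<in>A. fdiff f g x) \<le> objP f g A x"
        by (cases "x \<in> A") (auto simp: objP_def eadd_def indicator_e_def intro: INF_lower)
    qed
  qed
  then have "(INF x. objP f g A x) = ereal r" using assms(1) by (simp add: valP_def)
  then have "(SUP x. - objP f g A x) = - ereal r" by (simp add: ereal_SUP_uminus_eq)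
  then show ?thesis by (simp add: cconj_def e)
qed


theorem lemma4p7:
  fixes D :: "('a::real_vector \<Rightarrow> real) set"
    and f g :: "'a \<Rightarrow> ereal"
    and h :: "'i \<Rightarrow> 'a \<Rightarrow> ereal"
    and T :: "'i set"
    and A :: "'a set"
    and r :: real
  assumes "dual_pair D" and "separating D"
    and "\<exists>x::'a. x \<noteq> 0"
    and "proper_convex f" and "proper_convex g"
    and "\<forall>t\<in>T. proper_convex (h t)"
    and "A = {x. \<forall>t\<in>T. h t x \<le> 0}"
    and "valP f g A = ereal r"
  shows "epiW D (cconj (objP f g A)) \<inter> Bset
           = {(((\<lambda>_. 0), (\<lambda>_. 0), \<delta>), \<beta>) | \<delta> \<beta>. \<delta> > 0 \<and> \<beta> \<ge> - r}
       \<and> {(((\<lambda>_. 0), (\<lambda>_. 0), \<delta>), \<beta>) | \<delta> \<beta>. \<delta> > 0 \<and> \<beta> \<ge> - r}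
           = (\<Inter>x. epiW D (\<lambda>w. coupling' w x - ereal r))
       \<and> e'_convex_set D (epiW D (cconj (objP f g A)) \<inter> Bset)"

proof -
  have dp: "dual_pair D" by fact
  have z: "(\<lambda>_. 0) \<in> D" using dp by (simp add: dual_pair_def)
  define S :: "('a W \<times> real) set" where
    "S = {(((\<lambda>_. 0), (\<lambda>_. 0), \<delta>), \<beta>) | \<delta> \<beta>. \<delta> > 0 \<and> \<beta> \<ge> - r}"
  have memI: "(((a, b, \<alpha>), \<beta>) \<in> (\<Inter>x. epiW D (\<lambda>w. coupling' w x - ereal r))) \<longleftrightarrow>
      (a = (\<lambda>_. 0) \<and> b = (\<lambda>_. 0) \<and> \<alpha> > 0 \<and> - r \<le> \<beta>)" for a b \<alpha> \<beta>
  proof -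
    have "(((a, b, \<alpha>), \<beta>) \<in> (\<Inter>x. epiW D (\<lambda>w. coupling' w x - ereal r))) \<longleftrightarrow>
       (a \<in> D \<and> b \<in> D \<and> (\<forall>x. coupling x (a, b, \<alpha>) - ereal r \<le> ereal \<beta>))"
      by (auto simp: epiW_def Wset_def coupling'_def)
    then show ?thesis using char[OF dp, of a b \<alpha> r \<beta>] z by auto
  qed
  have e2: "S = (\<Inter>x. epiW D (\<lambda>w. coupling' w x - ereal r))"
  proof (rule set_eqI)
    fix p :: "'a W \<times> real"
    obtain a b \<alpha> \<beta> where p: "p = ((a, b, \<alpha>), \<beta>)" by (metis prod.exhaust)
    show "p \<in> S \<longleftrightarrow> p \<in> (\<Inter>x. epiW D (\<lambda>w. coupling' w x - ereal r))"
      unfolding p memI S_def by auto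
  qed
  have e1: "epiW D (cconj (objP f g A)) \<inter> Bset = S"
  proof (rule set_eqI)
    fix p :: "'a W \<times> real"
    obtain a b \<alpha> \<beta> where p: "p = ((a, b, \<alpha>), \<beta>)" by (metis prod.exhaust)
    show "p \<in> epiW D (cconj (objP f g A)) \<inter> Bset \<longleftrightarrow> p \<in> S"
    proof
      assume "p \<in> epiW D (cconj (objP f g A)) \<inter> Bset"
      then have "a = (\<lambda>_. 0)" "b = (\<lambda>_. 0)" "\<alpha> > 0" "cconj (objP f g A) (a, b, \<alpha>) \<le> ereal \<beta>"
        by (auto simp: p Bset_def epiW_def)
      with cconj_val[OF assms(8), of \<alpha>] show "p \<in> S" by (auto simp: p S_def)
    next
      assume "p \<in> S"
      then have "a = (\<lambda>_. 0)" "b = (\<lambda>_. 0)" "\<alpha> > 0" "- r \<le> \<beta>"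
        by (auto simp: p S_def)
      with cconj_val[OF assms(8), of \<alpha>] z show "p \<in> epiW D (cconj (objP f g A)) \<inter> Bset"
        by (auto simp: p Bset_def epiW_def Wset_def)
    qed
  qed
  define k :: "'a W \<Rightarrow> ereal" where
    "k w = (SUP (x, \<beta>)\<in>(UNIV \<times> {r}). coupling' w x - ereal \<beta>)" for w
  have k_le: "k w \<le> ereal \<beta> \<longleftrightarrow> (\<forall>x. coupling' w x - ereal r \<le> ereal \<beta>)" for w \<beta>
    by (auto simp: k_def SUP_le_iff)
  have epik: "epiW D k = (\<Inter>x. epiW D (\<lambda>w. coupling' w x - ereal r))"
    by (auto simp: epiW_def k_le)
  have kchar: "w \<in> Wset D \<Longrightarrow> k w \<le> ereal \<beta> \<longleftrightarrow>
      (\<exists>\<delta>. w = ((\<lambda>_. 0), (\<lambda>_. 0), \<delta>) \<and> \<delta> > 0 \<and> - r \<le> \<beta>)" for w \<beta>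
  proof -
    assume "w \<in> Wset D"
    obtain a b \<alpha> where w: "w = (a, b, \<alpha>)" by (metis prod.exhaust)
    have "k w \<le> ereal \<beta> \<longleftrightarrow> ((w, \<beta>) \<in> (\<Inter>x. epiW D (\<lambda>w. coupling' w x - ereal r)))"
      using \<open>w \<in> Wset D\<close> by (simp add: epiW_def k_le)
    then show ?thesis unfolding w memI by auto
  qed
  have cw: "convex_W D k"
    unfolding convex_W_def
  proof (intro ballI allI impI)
    fix w1 w2 and l b1 b2 :: real
    assume w1: "w1 \<in> Wset D" and w2: "w2 \<in> Wset D" and l: "0 \<le> l" "l \<le> 1"
      and k1: "k w1 \<le> ereal b1" and k2: "k w2 \<le> ereal b2"
    obtain d1 where d1: "w1 = ((\<lambda>_. 0), (\<lambda>_. 0), d1)" "d1 > 0" "- r \<le> b1"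
      using kchar[OF w1] k1 by blast
    obtain d2 where d2: "w2 = ((\<lambda>_. 0), (\<lambda>_. 0), d2)" "d2 > 0" "- r \<le> b2"
      using kchar[OF w2] k2 by blast
    have wc: "wcomb l w1 w2 = ((\<lambda>_. 0), (\<lambda>_. 0), l * d1 + (1 - l) * d2)"
      by (simp add: wcomb_def d1 d2)
    have pos: "l * d1 + (1 - l) * d2 > 0"
    proof (cases "l = 0")
      case True then show ?thesis using d2 by simp
    next
      case False then have "l > 0" using l by simp
      then have "l * d1 > 0" using d1 by simp
      moreover have "(1 - l) * d2 \<ge> 0" using l d2 by simp
      ultimately show ?thesis by linarith
    qed
    have "l * (- r) + (1 - l) * (- r) \<le> l * b1 + (1 - l) * b2"
      using l d1 d2 by (intro add_mono mult_left_mono) auto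
    then have b: "- r \<le> l * b1 + (1 - l) * b2" by (simp add: algebra_simps)
    have "wcomb l w1 w2 \<in> Wset D" using z by (simp add: wc Wset_def)
    then show "k (wcomb l w1 w2) \<le> ereal (l * b1 + (1 - l) * b2)"
      using kchar pos b wc by blast
  qed
  have "e'_convex_fun D k"
    unfolding e'_convex_fun_def using cw by (auto simp: k_def)
  then have "e'_convex_set D S"
    unfolding e'_convex_set_def using epik e2 by auto
  then show ?thesis using e1 e2 S_def by simp
qed

end
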